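(* Let $n\in\mathbb{N}$, let $\eta_1,\dots,\eta_{n+1}\in\mathbb{R}^d$ with $\eta_{n+1}=0$ and $\lvert(\nabla_+\eta)_k\rvert=1$ for $1\le k\le n$, and let $w_1,\dots,w_n\ge0$. Let $\alpha_i=\langle(\nabla_+\eta)_{i+1},(\nabla_+\eta)_i\rangle$ for $1\le i\le n-1$. Consider the linear system for $\sigma_1,\dots,\sigma_n$ (with $\sigma_0=0$): $\alpha_k\sigma_{k+1}-2\sigma_k+\alpha_{k-1}\sigma_{k-1}=-\tfrac{1}{n^2}w_k$ for $1\le k\le n-1$ (the term $\alpha_{k-1}\sigma_{k-1}$ being absent for $k=1$), and $\alpha_{n-1}\sigma_{n-1}-\sigma_n=-\tfrac1{n^2}w_n$. Its solution is $\sigma_k=\frac1n\sum_{j=1}^nG_{kj}w_j$, where $G_{kj}=\frac1n\sum_{i=1}^{\min\{j,k\}}\frac{p_{ij}p_{ik}}{\beta_i}$, $p_{ij}=\prod_{m=i}^{j-1}\frac{\alpha_m}{\beta_{m+1}}$ (empty product $=1$), and $\beta_n=1$, $\beta_i=2-\alpha_i^2/\beta_{i+1}$ for $1\le i\le n-1$. Moreover, $\sigma_k>0$ for all $1\le k\le n$ for every choice of $w_1,\dots,w_n\ge0$ not all zero if and only if $\alpha_i>0$ for every $1\le i\le n-1$.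
   Context: For a finite sequence $f$, $(\nabla_+f)_k=n(f_{k+1}-f_k)$. In the chain model one takes $w_j=\lvert(\nabla_+\dot\eta)_j\rvert^2$ (with $\dot\eta_{n+1}=0$), and the system above is the tension (constraint) equation of the chain. *)

theory Defs
  imports "HOL-Analysis.Analysis"
begin

definition nabla_plus :: "nat \<Rightarrow> (nat \<Rightarrow> 'a::real_vector) \<Rightarrow> nat \<Rightarrow> 'a" where
  "nabla_plus n f k = real n *\<^sub>R (f (Suc k) - f k)"

definition chain_alpha :: "nat \<Rightarrow> (nat \<Rightarrow> 'a::real_inner) \<Rightarrow> nat \<Rightarrow> real" where
  "chain_alpha n eta i = inner (nabla_plus n eta (Suc i)) (nabla_plus n eta i)"

text \<open>beta_aux alpha n m = beta_{n-m}: beta_n = 1, beta_i = 2 - alpha_i^2 / beta_{i+1}.\<close>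
fun beta_aux :: "(nat \<Rightarrow> real) \<Rightarrow> nat \<Rightarrow> nat \<Rightarrow> real" where
  "beta_aux alpha n 0 = 1"
| "beta_aux alpha n (Suc m) = 2 - (alpha (n - Suc m))\<^sup>2 / beta_aux alpha n m"

definition chain_beta :: "nat \<Rightarrow> (nat \<Rightarrow> real) \<Rightarrow> nat \<Rightarrow> real" where
  "chain_beta n alpha i = beta_aux alpha n (n - i)"

definition chain_p :: "nat \<Rightarrow> (nat \<Rightarrow> real) \<Rightarrow> nat \<Rightarrow> nat \<Rightarrow> real" where
  "chain_p n alpha i j = (\<Prod>m\<in>{i..<j}. alpha m / chain_beta n alpha (Suc m))"

definition chain_G :: "nat \<Rightarrow> (nat \<Rightarrow> real) \<Rightarrow> nat \<Rightarrow> nat \<Rightarrow> real" where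
  "chain_G n alpha k j = (1 / real n) *
     (\<Sum>i\<in>{1..min j k}. chain_p n alpha i j * chain_p n alpha i k / chain_beta n alpha i)"

definition chain_system :: "nat \<Rightarrow> (nat \<Rightarrow> real) \<Rightarrow> (nat \<Rightarrow> real) \<Rightarrow> (nat \<Rightarrow> real) \<Rightarrow> bool" where
  "chain_system n alpha w sg \<longleftrightarrow>
     (\<forall>k\<in>{1..n-1}. alpha k * sg (Suc k) - 2 * sg k
        + (if k = 1 then 0 else alpha (k - 1) * sg (k - 1)) = - w k / (real n)\<^sup>2)
   \<and> (if n = 1 then 0 else alpha (n - 1) * sg (n - 1)) - sg n = - w n / (real n)\<^sup>2"

end

theory Submission imports Defs begin

abbreviation "bb n a i \<equiv> chain_beta n a i"

lemma beta_n: "chain_beta n a n = 1"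
  by (simp add: chain_beta_def)

lemma beta_rec: "1 \<le> i \<Longrightarrow> i < n \<Longrightarrow> chain_beta n a i = 2 - (a i)\<^sup>2 / chain_beta n a (Suc i)"
proof -
  assume h: "1 \<le> i" "i < n"
  have e: "n - i = Suc (n - Suc i)" using h by simp
  have e2: "n - Suc (n - Suc i) = i" using h by simp
  show ?thesis unfolding chain_beta_def e by (simp add: e2)
qed

lemma beta_ge1_aux: "\<forall>i\<in>{1..n-1}. (a i)\<^sup>2 \<le> (1::real) \<Longrightarrow> m < n \<Longrightarrow> beta_aux a n m \<ge> 1"
proof (induction m)
  case 0 then show ?case by simp
next
  case (Suc m)
  then have b: "beta_aux a n m \<ge> 1" by simp
  have "n - Suc m \<in> {1..n-1}" using Suc.prems by auto
  then have "(a (n - Suc m))\<^sup>2 \<le> 1" using Suc.prems(1) by blast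
  then have "(a (n - Suc m))\<^sup>2 / beta_aux a n m \<le> 1"
    using b by (simp add: divide_le_eq)
  then show ?case by simp
qed

lemma beta_ge1: "\<forall>i\<in>{1..n-1}. (a i)\<^sup>2 \<le> (1::real) \<Longrightarrow> 1 \<le> i \<Longrightarrow> i \<le> n \<Longrightarrow> chain_beta n a i \<ge> 1"
  unfolding chain_beta_def by (rule beta_ge1_aux) auto

lemma p_refl: "chain_p n a i i = 1" by (simp add: chain_p_def)

lemma p_Suc: "i \<le> j \<Longrightarrow> chain_p n a i (Suc j) = chain_p n a i j * (a j / chain_beta n a (Suc j))"
  unfolding chain_p_def by (simp add: prod.atLeastLessThan_Suc)

lemma p_lo: "i < j \<Longrightarrow> chain_p n a i j = a i / chain_beta n a (Suc i) * chain_p n a (Suc i) j"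
  unfolding chain_p_def by (simp add: prod.atLeast_Suc_lessThan)

definition tt :: "nat \<Rightarrow> (nat \<Rightarrow> real) \<Rightarrow> (nat \<Rightarrow> real) \<Rightarrow> nat \<Rightarrow> real" where
  "tt n a r k = (1 / chain_beta n a k) * (\<Sum>j\<in>{k..n}. chain_p n a k j * r j)"

lemma tt_n: "tt n a r n = r n"
  by (simp add: tt_def beta_n p_refl)

lemma tt_rec: assumes "k < n" "chain_beta n a k \<noteq> 0"
  shows "chain_beta n a k * tt n a r k = r k + a k * tt n a r (Suc k)"
proof -
  have "(\<Sum>j\<in>{k..n}. chain_p n a k j * r j) = r k + (\<Sum>j\<in>{Suc k..n}. chain_p n a k j * r j)"
    using assms(1) by (simp add: sum.atLeast_Suc_atMost p_refl)
  also have "(\<Sum>j\<in>{Suc k..n}. chain_p n a k j * r j)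
     = (\<Sum>j\<in>{Suc k..n}. a k / chain_beta n a (Suc k) * (chain_p n a (Suc k) j * r j))"
    by (rule sum.cong) (auto simp: p_lo)
  also have "\<dots> = a k * tt n a r (Suc k)"
    by (simp add: tt_def sum_distrib_left)
  finally show ?thesis using assms(2) by (simp add: tt_def)
qed

definition PP :: "nat \<Rightarrow> (nat \<Rightarrow> real) \<Rightarrow> (nat \<Rightarrow> real) \<Rightarrow> (nat \<Rightarrow> real) \<Rightarrow> bool" where
  "PP n a r s \<longleftrightarrow> s 1 = tt n a r 1 \<and>
     (\<forall>k\<in>{2..n}. s k = a (k-1) / chain_beta n a k * s (k-1) + tt n a r k)"

lemma sys_to_PP:
  assumes n1: "n \<ge> 1" and bpos: "\<forall>i\<in>{1..n}. chain_beta n a i > 0"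
    and sys: "chain_system n a w s"
  shows "PP n a (\<lambda>j. w j / (real n)\<^sup>2) s"
proof -
  define r where "r = (\<lambda>j. w j / (real n)\<^sup>2)"
  have eq: "a k * s (Suc k) - 2 * s k + (if k = 1 then 0 else a (k - 1) * s (k - 1)) = - r k"
    if "1 \<le> k" "k < n" for k
    using sys that unfolding chain_system_def r_def by auto
  have last: "(if n = 1 then 0 else a (n - 1) * s (n - 1)) - s n = - r n"
    using sys unfolding chain_system_def r_def by auto
  have down: "s k = a (k-1) / chain_beta n a k * s (k-1) + tt n a r k" if "2 \<le> k" "k \<le> n" for k
    using that(2,1)
  proof (induction rule: inc_induct)
    case base
    have "n \<noteq> 1" using that by auto
    then show ?case using last by (simp add: beta_n tt_n)
  next
    case (step m)
    have b1: "chain_beta n a (Suc m) > 0" using bpos step by auto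
    have b0: "chain_beta n a m > 0" using bpos step by auto
    have br: "chain_beta n a m = 2 - (a m)\<^sup>2 / chain_beta n a (Suc m)"
      using step by (intro beta_rec) auto
    have tr: "chain_beta n a m * tt n a r m = r m + a m * tt n a r (Suc m)"
      using step b0 by (intro tt_rec) auto
    have e: "a m * s (Suc m) - 2 * s m + a (m - 1) * s (m - 1) = - r m"
      using eq[of m] step by auto
    have IH: "s (Suc m) = a m / chain_beta n a (Suc m) * s m + tt n a r (Suc m)"
      using step by simp
    have br': "chain_beta n a m * chain_beta n a (Suc m) = 2 * chain_beta n a (Suc m) - (a m)\<^sup>2"
      using br b1 by (simp add: field_simps)
    have e2: "chain_beta n a (Suc m) * (a m * (a m / chain_beta n a (Suc m) * s m + tt n a r (Suc m)) - 2 * s m + a (m - 1) * s (m - 1)) = chain_beta n a (Suc m) * (- r m)"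
      using e IH by simp
    have e3: "(a m)\<^sup>2 * s m + chain_beta n a (Suc m) * a m * tt n a r (Suc m) - 2 * chain_beta n a (Suc m) * s m + chain_beta n a (Suc m) * (a (m - 1) * s (m - 1)) = - chain_beta n a (Suc m) * r m"
      using e2 b1 by (simp add: algebra_simps power2_eq_square)
    have "chain_beta n a (Suc m) * (chain_beta n a m * s m) = (chain_beta n a m * chain_beta n a (Suc m)) * s m" by simp
    also have "\<dots> = 2 * chain_beta n a (Suc m) * s m - (a m)\<^sup>2 * s m" unfolding br' by (simp add: algebra_simps)
    also have "\<dots> = chain_beta n a (Suc m) * (r m + a m * tt n a r (Suc m)) + chain_beta n a (Suc m) * (a (m - 1) * s (m - 1))"
      using e3 by (simp add: algebra_simps)
    also have "\<dots> = chain_beta n a (Suc m) * (a (m - 1) * s (m - 1) + chain_beta n a m * tt n a r m)"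
      using tr by (simp add: algebra_simps)
    finally have "chain_beta n a (Suc m) * (chain_beta n a m * s m) = chain_beta n a (Suc m) * (a (m - 1) * s (m - 1) + chain_beta n a m * tt n a r m)" .
    then have "chain_beta n a m * s m = a (m - 1) * s (m - 1) + chain_beta n a m * tt n a r m"
      using b1 by simp
    then show ?case using b0 by (simp add: field_simps)
  qed
  have first: "s 1 = tt n a r 1"
  proof (cases "n = 1")
    case True
    then show ?thesis using last by (simp add: tt_n)
  next
    case False
    then have n2: "n \<ge> 2" using n1 by auto
    have b1: "chain_beta n a 2 > 0" using bpos n2 by auto
    have b0: "chain_beta n a 1 > 0" using bpos n2 by auto
    have br: "chain_beta n a 1 = 2 - (a 1)\<^sup>2 / chain_beta n a 2"
      using beta_rec[of 1 n a] n2 by (simp add: numeral_2_eq_2)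
    have tr: "chain_beta n a 1 * tt n a r 1 = r 1 + a 1 * tt n a r 2"
      using tt_rec[of 1 n a r] n2 b0 by (simp add: numeral_2_eq_2)
    have e: "a 1 * s 2 - 2 * s 1 = - r 1"
      using eq[of 1] n2 by (simp add: numeral_2_eq_2)
    have IH: "s 2 = a 1 / chain_beta n a 2 * s 1 + tt n a r 2"
      using down[of 2] n2 by simp
    have br': "chain_beta n a 1 * chain_beta n a 2 = 2 * chain_beta n a 2 - (a 1)\<^sup>2"
      using br b1 by (simp add: field_simps)
    have e2: "chain_beta n a 2 * (a 1 * (a 1 / chain_beta n a 2 * s 1 + tt n a r 2) - 2 * s 1) = chain_beta n a 2 * (- r 1)"
      using e IH by simp
    have e3: "(a 1)\<^sup>2 * s 1 + chain_beta n a 2 * a 1 * tt n a r 2 - 2 * chain_beta n a 2 * s 1 = - chain_beta n a 2 * r 1"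
      using e2 b1 by (simp add: algebra_simps power2_eq_square)
    have "chain_beta n a 2 * (chain_beta n a 1 * s 1) = (chain_beta n a 1 * chain_beta n a 2) * s 1" by simp
    also have "\<dots> = 2 * chain_beta n a 2 * s 1 - (a 1)\<^sup>2 * s 1" unfolding br' by (simp add: algebra_simps)
    also have "\<dots> = chain_beta n a 2 * (r 1 + a 1 * tt n a r 2)"
      using e3 by (simp add: algebra_simps)
    also have "\<dots> = chain_beta n a 2 * (chain_beta n a 1 * tt n a r 1)"
      using tr by (simp add: algebra_simps)
    finally have "chain_beta n a 2 * (chain_beta n a 1 * s 1) = chain_beta n a 2 * (chain_beta n a 1 * tt n a r 1)" .
    then have "chain_beta n a 1 * s 1 = chain_beta n a 1 * tt n a r 1"
      using b1 by simp
    then show ?thesis using b0 by simp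
  qed
  show ?thesis unfolding PP_def r_def[symmetric] using first down by auto
qed

lemma PP_to_sys:
  assumes n1: "n \<ge> 1" and bpos: "\<forall>i\<in>{1..n}. chain_beta n a i > 0"
    and P: "PP n a (\<lambda>j. w j / (real n)\<^sup>2) s"
  shows "chain_system n a w s"
proof -
  define r where "r = (\<lambda>j. w j / (real n)\<^sup>2)"
  have P1: "s 1 = tt n a r 1" and P2: "\<And>k. 2 \<le> k \<Longrightarrow> k \<le> n \<Longrightarrow> s k = a (k-1) / chain_beta n a k * s (k-1) + tt n a r k"
    using P unfolding PP_def r_def by auto
  have eq: "a k * s (Suc k) - 2 * s k + (if k = 1 then 0 else a (k - 1) * s (k - 1)) = - r k"
    if k: "1 \<le> k" "k < n" for k
  proof -
    have b1: "chain_beta n a (Suc k) > 0" using bpos k by auto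
    have b0: "chain_beta n a k > 0" using bpos k by auto
    have br: "chain_beta n a k = 2 - (a k)\<^sup>2 / chain_beta n a (Suc k)"
      using k by (intro beta_rec) auto
    have br': "chain_beta n a k * chain_beta n a (Suc k) = 2 * chain_beta n a (Suc k) - (a k)\<^sup>2"
      using br b1 by (simp add: field_simps)
    have tr: "chain_beta n a k * tt n a r k = r k + a k * tt n a r (Suc k)"
      using k b0 by (intro tt_rec) auto
    have S: "s (Suc k) = a k / chain_beta n a (Suc k) * s k + tt n a r (Suc k)"
      using P2[of "Suc k"] k by simp
    have L: "(if k = 1 then 0 else a (k - 1) * s (k - 1)) = chain_beta n a k * s k - chain_beta n a k * tt n a r k"
    proof (cases "k = 1")
      case True then show ?thesis using P1 by simp
    next
      case False
      then have "s k = a (k-1) / chain_beta n a k * s (k-1) + tt n a r k" using P2[of k] k by simp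
      then have "chain_beta n a k * s k = a (k-1) * s (k-1) + chain_beta n a k * tt n a r k"
        using b0 by (simp add: field_simps)
      then show ?thesis using False by simp
    qed
    have "chain_beta n a (Suc k) * (a k * s (Suc k)) = (a k)\<^sup>2 * s k + chain_beta n a (Suc k) * (a k * tt n a r (Suc k))"
      unfolding S using b1 by (simp add: field_simps power2_eq_square)
    also have "(a k)\<^sup>2 * s k = 2 * chain_beta n a (Suc k) * s k - chain_beta n a (Suc k) * (chain_beta n a k * s k)"
    proof -
      have A2: "(a k)\<^sup>2 = 2 * chain_beta n a (Suc k) - chain_beta n a k * chain_beta n a (Suc k)" using br' by simp
      show ?thesis unfolding A2 by (simp add: algebra_simps)
    qed
    finally have X: "chain_beta n a (Suc k) * (a k * s (Suc k)) = chain_beta n a (Suc k) * (2 * s k - chain_beta n a k * s k + a k * tt n a r (Suc k))"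
      by (simp add: algebra_simps)
    have "a k * s (Suc k) = 2 * s k - chain_beta n a k * s k + a k * tt n a r (Suc k)"
      using X b1 by simp
    then show ?thesis unfolding L using tr by (simp add: algebra_simps)
  qed
  have last: "(if n = 1 then 0 else a (n - 1) * s (n - 1)) - s n = - r n"
  proof (cases "n = 1")
    case True then show ?thesis using P1 by (simp add: tt_n)
  next
    case False
    then have "s n = a (n-1) / chain_beta n a n * s (n-1) + tt n a r n" using P2[of n] n1 by simp
    then show ?thesis using False by (simp add: beta_n tt_n)
  qed
  show ?thesis unfolding chain_system_def
  proof (intro conjI ballI)
    fix k assume "k \<in> {1..n-1}"
    then have "1 \<le> k" "k < n" by auto
    from eq[OF this] show "a k * s (Suc k) - 2 * s k + (if k = 1 then 0 else a (k - 1) * s (k - 1)) = - w k / (real n)\<^sup>2"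
      unfolding r_def by simp
  next
    show "(if n = 1 then 0 else a (n - 1) * s (n - 1)) - s n = - w n / (real n)\<^sup>2"
      using last unfolding r_def by simp
  qed
qed

definition FF :: "nat \<Rightarrow> (nat \<Rightarrow> real) \<Rightarrow> (nat \<Rightarrow> real) \<Rightarrow> nat \<Rightarrow> real" where
  "FF n a r k = (\<Sum>i\<in>{1..k}. chain_p n a i k * tt n a r i)"

lemma FF_1: "FF n a r 1 = tt n a r 1"
  by (simp add: FF_def p_refl)

lemma FF_rec: assumes "2 \<le> k" shows "FF n a r k = a (k-1) / chain_beta n a k * FF n a r (k-1) + tt n a r k"
proof -
  obtain m where m: "k = Suc m" "m \<ge> 1" using assms by (cases k) auto
  have "FF n a r (Suc m) = (\<Sum>i\<in>{1..m}. chain_p n a i (Suc m) * tt n a r i) + tt n a r (Suc m)"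
    unfolding FF_def by (simp add: p_refl)
  also have "(\<Sum>i\<in>{1..m}. chain_p n a i (Suc m) * tt n a r i) = a m / chain_beta n a (Suc m) * FF n a r m"
    unfolding FF_def sum_distrib_left by (rule sum.cong) (auto simp: p_Suc)
  finally show ?thesis using m by simp
qed

lemma PP_iff_FF: "n \<ge> 1 \<Longrightarrow> PP n a r s \<longleftrightarrow> (\<forall>k\<in>{1..n}. s k = FF n a r k)"
proof
  assume n1: "n \<ge> 1" and P: "PP n a r s"
  have "s k = FF n a r k" if "1 \<le> k" "k \<le> n" for k
    using that
  proof (induction k)
    case 0 then show ?case by simp
  next
    case (Suc m)
    show ?case
    proof (cases "m = 0")
      case True then show ?thesis using P FF_1[of n a r] by (simp add: PP_def)
    next
      case False
      then have "s (Suc m) = a m / chain_beta n a (Suc m) * s m + tt n a r (Suc m)"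
        using P Suc.prems unfolding PP_def by auto
      then show ?thesis using Suc False FF_rec[of "Suc m" n a r] by simp
    qed
  qed
  then show "\<forall>k\<in>{1..n}. s k = FF n a r k" by auto
next
  assume n1: "n \<ge> 1" and H: "\<forall>k\<in>{1..n}. s k = FF n a r k"
  show "PP n a r s" unfolding PP_def
  proof (intro conjI ballI)
    show "s 1 = tt n a r 1" using H n1 FF_1[of n a r] by simp
  next
    fix k assume k: "k \<in> {2..n}"
    then have "k \<in> {1..n}" "k - 1 \<in> {1..n}" by auto
    then have "s k = FF n a r k" "s (k-1) = FF n a r (k-1)" using H by blast+
    then show "s k = a (k - 1) / chain_beta n a k * s (k - 1) + tt n a r k"
      using FF_rec[of k n a r] k by simp
  qed
qed

lemma FF_closed: assumes "k \<le> n"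
  shows "FF n a r k = (\<Sum>j\<in>{1..n}. (\<Sum>i\<in>{1..min j k}. chain_p n a i j * chain_p n a i k / chain_beta n a i) * r j)"
proof -
  have "FF n a r k = (\<Sum>i\<in>{1..k}. \<Sum>j\<in>{j. j \<in> {1..n} \<and> i \<le> j}. chain_p n a i k / chain_beta n a i * (chain_p n a i j * r j))"
    unfolding FF_def tt_def
  proof (rule sum.cong)
    fix i assume i: "i \<in> {1..k}"
    then have "{j. j \<in> {1..n} \<and> i \<le> j} = {i..n}" by auto
    then show "chain_p n a i k * (1 / chain_beta n a i * (\<Sum>j = i..n. chain_p n a i j * r j)) =
      (\<Sum>j\<in>{j. j \<in> {1..n} \<and> i \<le> j}. chain_p n a i k / chain_beta n a i * (chain_p n a i j * r j))"
      by (simp add: sum_distrib_left)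
  qed simp
  also have "\<dots> = (\<Sum>j\<in>{1..n}. \<Sum>i\<in>{i. i \<in> {1..k} \<and> i \<le> j}. chain_p n a i k / chain_beta n a i * (chain_p n a i j * r j))"
    by (rule sum.swap_restrict) auto
  also have "\<dots> = (\<Sum>j\<in>{1..n}. (\<Sum>i\<in>{1..min j k}. chain_p n a i j * chain_p n a i k / chain_beta n a i) * r j)"
  proof (rule sum.cong)
    fix j assume "j \<in> {1..n}"
    have "{i. i \<in> {1..k} \<and> i \<le> j} = {1..min j k}" by auto
    then show "(\<Sum>i\<in>{i. i \<in> {1..k} \<and> i \<le> j}. chain_p n a i k / chain_beta n a i * (chain_p n a i j * r j)) =
      (\<Sum>i\<in>{1..min j k}. chain_p n a i j * chain_p n a i k / chain_beta n a i) * r j"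
      by (simp add: sum_distrib_right sum_distrib_left mult_ac)
  qed simp
  finally show ?thesis .
qed

lemma alg_aux: "(x::real) * (y / c\<^sup>2) = 1 / c * ((1 / c * x) * y)"
  by (simp add: power2_eq_square)

lemma sys_iff:
  assumes n1: "n \<ge> 1" and bpos: "\<forall>i\<in>{1..n}. chain_beta n a i > 0"
  shows "chain_system n a w s \<longleftrightarrow>
    (\<forall>k\<in>{1..n}. s k = (1 / real n) * (\<Sum>j\<in>{1..n}. chain_G n a k j * w j))"
proof -
  define r where "r = (\<lambda>j. w j / (real n)\<^sup>2)"
  have "chain_system n a w s \<longleftrightarrow> PP n a r s"
    using sys_to_PP[OF n1 bpos] PP_to_sys[OF n1 bpos] unfolding r_def by blast
  also have "\<dots> \<longleftrightarrow> (\<forall>k\<in>{1..n}. s k = FF n a r k)" using PP_iff_FF[OF n1] .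
  also have "\<dots> \<longleftrightarrow> (\<forall>k\<in>{1..n}. s k = (1 / real n) * (\<Sum>j\<in>{1..n}. chain_G n a k j * w j))"
  proof -
    have "FF n a r k = (1 / real n) * (\<Sum>j\<in>{1..n}. chain_G n a k j * w j)" if "k \<in> {1..n}" for k
    proof -
      have "FF n a r k = (\<Sum>j\<in>{1..n}. (\<Sum>i\<in>{1..min j k}. chain_p n a i j * chain_p n a i k / chain_beta n a i) * r j)"
        using that by (intro FF_closed) auto
      also have "\<dots> = (1 / real n) * (\<Sum>j\<in>{1..n}. chain_G n a k j * w j)"
        unfolding r_def alg_aux chain_G_def sum_distrib_left[symmetric] ..
      finally show ?thesis .
    qed
    then show ?thesis by auto
  qed
  finally show ?thesis .
qed

lemma p_pos: assumes "\<forall>i\<in>{1..n-1}. a i > 0" "\<forall>i\<in>{1..n}. chain_beta n a i > 0" "1 \<le> i" "j \<le> n"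
  shows "chain_p n a i j > 0"
  unfolding chain_p_def
proof (rule prod_pos)
  fix m assume "m \<in> {i..<j}"
  then have "m \<in> {1..n-1}" "Suc m \<in> {1..n}" using assms by auto
  then show "0 < a m / chain_beta n a (Suc m)" using assms by auto
qed

theorem proposition3p2:
  fixes n :: nat and eta :: "nat \<Rightarrow> 'a::euclidean_space" and w :: "nat \<Rightarrow> real"
  assumes n_pos: "n \<ge> 1"
    and eta_end: "eta (Suc n) = 0"
    and unit: "\<forall>k\<in>{1..n}. norm (nabla_plus n eta k) = 1"
    and w_nonneg: "\<forall>j\<in>{1..n}. w j \<ge> 0"
  shows "(\<forall>sg. chain_system n (chain_alpha n eta) w sg \<longleftrightarrow>
            (\<forall>k\<in>{1..n}. sg k =
               (1 / real n) * (\<Sum>j\<in>{1..n}. chain_G n (chain_alpha n eta) k j * w j)))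
       \<and> ((\<forall>w'. (\<forall>j\<in>{1..n}. w' j \<ge> 0) \<and> (\<exists>j\<in>{1..n}. w' j \<noteq> 0) \<longrightarrow>
              (\<forall>sg. chain_system n (chain_alpha n eta) w' sg \<longrightarrow>
                 (\<forall>k\<in>{1..n}. sg k > 0)))
          \<longleftrightarrow> (\<forall>i\<in>{1..n-1}. chain_alpha n eta i > 0))"
proof -
  define a where "a = chain_alpha n eta"
  have asq: "\<forall>i\<in>{1..n-1}. (a i)\<^sup>2 \<le> 1"
  proof
    fix i assume i: "i \<in> {1..n-1}"
    then have "norm (nabla_plus n eta i) = 1" "norm (nabla_plus n eta (Suc i)) = 1" using unit by auto
    then have "\<bar>a i\<bar> \<le> 1" unfolding a_def chain_alpha_def
      using Cauchy_Schwarz_ineq2[of "nabla_plus n eta (Suc i)" "nabla_plus n eta i"] by simp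
    then show "(a i)\<^sup>2 \<le> 1" by (metis abs_le_square_iff abs_one one_power2)
  qed
  have bpos: "\<forall>i\<in>{1..n}. chain_beta n a i > 0"
  proof
    fix i assume "i \<in> {1..n}"
    then have "chain_beta n a i \<ge> 1" using beta_ge1[OF asq] by auto
    then show "chain_beta n a i > 0" by simp
  qed
  note SI = sys_iff[OF n_pos bpos]
  have part2: "(\<forall>w'. (\<forall>j\<in>{1..n}. w' j \<ge> 0) \<and> (\<exists>j\<in>{1..n}. w' j \<noteq> 0) \<longrightarrow>
              (\<forall>sg. chain_system n a w' sg \<longrightarrow> (\<forall>k\<in>{1..n}. sg k > 0)))
          \<longleftrightarrow> (\<forall>i\<in>{1..n-1}. a i > 0)"
  proof
    assume H: "\<forall>w'. (\<forall>j\<in>{1..n}. w' j \<ge> 0) \<and> (\<exists>j\<in>{1..n}. w' j \<noteq> 0) \<longrightarrow>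
              (\<forall>sg. chain_system n a w' sg \<longrightarrow> (\<forall>k\<in>{1..n}. sg k > 0))"
    show "\<forall>i\<in>{1..n-1}. a i > 0"
    proof (rule ballI, rule ccontr)
      fix i assume i: "i \<in> {1..n-1}" and ng: "\<not> a i > 0"
      define w' where "w' = (\<lambda>j. if j = Suc i then 1 else (0::real))"
      define sg where "sg = (\<lambda>k. (1 / real n) * (\<Sum>j\<in>{1..n}. chain_G n a k j * w' j))"
      have sys: "chain_system n a w' sg" using SI unfolding sg_def by simp
      have "\<forall>j\<in>{1..n}. w' j \<ge> 0" "\<exists>j\<in>{1..n}. w' j \<noteq> 0"
        using i unfolding w'_def by (auto intro!: bexI[of _ "Suc i"])
      then have pos: "sg i > 0" using H sys i by auto
      have Si: "Suc i \<in> {1..n}" using i by auto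
      have "sg i = (1 / real n) * chain_G n a i (Suc i)"
        unfolding sg_def w'_def using Si by (simp add: if_distrib cong: if_cong)
      also have "chain_G n a i (Suc i) = (1 / real n) * (a i / chain_beta n a (Suc i) *
          (\<Sum>l\<in>{1..i}. (chain_p n a l i)\<^sup>2 / chain_beta n a l))"
      proof -
        have "(\<Sum>l\<in>{1..min (Suc i) i}. chain_p n a l (Suc i) * chain_p n a l i / chain_beta n a l)
           = a i / chain_beta n a (Suc i) * (\<Sum>l\<in>{1..i}. (chain_p n a l i)\<^sup>2 / chain_beta n a l)"
          unfolding sum_distrib_left by (rule sum.cong) (auto simp: p_Suc power2_eq_square)
        then show ?thesis unfolding chain_G_def by simp
      qed
      finally have e: "sg i = 1 / real n * (1 / real n * (a i / chain_beta n a (Suc i) *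
          (\<Sum>l\<in>{1..i}. (chain_p n a l i)\<^sup>2 / chain_beta n a l)))" .
      have "(\<Sum>l\<in>{1..i}. (chain_p n a l i)\<^sup>2 / chain_beta n a l) \<ge> 0"
      proof (rule sum_nonneg)
        fix l assume "l \<in> {1..i}"
        then have "chain_beta n a l > 0" using bpos i by auto
        then show "0 \<le> (chain_p n a l i)\<^sup>2 / chain_beta n a l" by simp
      qed
      moreover have "a i / chain_beta n a (Suc i) \<le> 0" using ng bpos Si
        by (simp add: divide_nonpos_pos)
      ultimately have "a i / chain_beta n a (Suc i) * (\<Sum>l\<in>{1..i}. (chain_p n a l i)\<^sup>2 / chain_beta n a l) \<le> 0"
        by (metis mult_nonpos_nonneg)
      then have X: "1 / real n * (a i / chain_beta n a (Suc i) * (\<Sum>l\<in>{1..i}. (chain_p n a l i)\<^sup>2 / chain_beta n a l)) \<le> 0"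
        by (rule mult_nonneg_nonpos[rotated]) simp
      have "sg i \<le> 0" unfolding e
        by (rule mult_nonneg_nonpos[OF _ X]) simp
      then show False using pos by simp
    qed
  next
    assume A: "\<forall>i\<in>{1..n-1}. a i > 0"
    have Gpos: "chain_G n a k j > 0" if "k \<in> {1..n}" "j \<in> {1..n}" for k j
    proof -
      have "(\<Sum>i\<in>{1..min j k}. chain_p n a i j * chain_p n a i k / chain_beta n a i) > 0"
      proof (rule sum_pos)
        fix i assume "i \<in> {1..min j k}"
        then show "chain_p n a i j * chain_p n a i k / chain_beta n a i > 0"
          using that p_pos[OF A bpos, of i j] p_pos[OF A bpos, of i k] bpos by auto
      qed (use that in auto)
      then show ?thesis unfolding chain_G_def using n_pos by simp
    qed
    show "\<forall>w'. (\<forall>j\<in>{1..n}. w' j \<ge> 0) \<and> (\<exists>j\<in>{1..n}. w' j \<noteq> 0) \<longrightarrow>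
              (\<forall>sg. chain_system n a w' sg \<longrightarrow> (\<forall>k\<in>{1..n}. sg k > 0))"
    proof (intro allI impI ballI)
      fix w' sg k
      assume W: "(\<forall>j\<in>{1..n}. w' j \<ge> 0) \<and> (\<exists>j\<in>{1..n}. w' j \<noteq> 0)"
        and sys: "chain_system n a w' sg" and k: "k \<in> {1..n}"
      obtain j0 where j0: "j0 \<in> {1..n}" "w' j0 \<noteq> 0" using W by auto
      have "sg k = (1 / real n) * (\<Sum>j\<in>{1..n}. chain_G n a k j * w' j)"
        using sys k sys_iff[OF n_pos bpos, of w' sg] by auto
      moreover have "(\<Sum>j\<in>{1..n}. chain_G n a k j * w' j) > 0"
      proof (rule sum_pos2)
        show "chain_G n a k j0 * w' j0 > 0" using Gpos[OF k j0(1)] W j0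
          by (metis less_eq_real_def mult_pos_pos)
        show "\<And>j. j \<in> {1..n} \<Longrightarrow> 0 \<le> chain_G n a k j * w' j"
          using Gpos[OF k] W by (simp add: less_imp_le)
      qed (use j0 in auto)
      ultimately show "sg k > 0" using n_pos by simp
    qed
  qed
  show ?thesis using SI part2 unfolding a_def by blast
qed

end
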